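(* Assume there is $\xi>0$ such that $\|\mathbf{n}\cdot\nabla|\phi(\theta)\rangle\|_2\le\xi$ for all $\theta\in\mathbb{R}^K$ and all unit vectors $\mathbf{n}\in\mathbb{R}^K$. Suppose the guiding function $\alpha$ is parameterised by a rectifier neural network with one hidden layer of $L\ge 2K$ neurons, with $W(A)=e^{-A}$ and prior guiding function $F(\theta)=1$. Then for every $\theta\in\mathbb{R}^K$ and every $x<1$, $$\inf_{|\widetilde\psi(\lambda)\rangle\in\mathcal{V}_x}\big\||\widetilde\psi(\lambda)\rangle-|\phi(\theta)\rangle\big\|_2=0 .$$
   Context: Fix $n$ qubits, $\mathcal{H}=(\mathbb{C}^2)^{\otimes n}$, and a parameterised circuit with normalised states $|\phi(\theta)\rangle=U(\theta)|0\rangle^{\otimes n}$, $U(\theta)$ unitary, defined and differentiable for all $\theta\in\Theta=\mathbb{R}^K$; $\|\cdot\|_2$ is the Euclidean norm on $\mathcal{H}$. Rectifier network: with $\mathrm{ReLU}(z)=\max\{0,z\}$ applied componentwise, for input $\theta\in\mathbb{R}^K$ set $h=\mathrm{ReLU}(w\theta+b)\in\mathbb{R}^L$, $A=w_A\cdot h+b_A$, $B=w_B\cdot h+b_B$, where $w\in\mathbb{R}^{L\times K}$, $b,w_A,w_B\in\mathbb{R}^L$, $b_A,b_B\in\mathbb{R}$; $\lambda=(w,b,w_A,b_A,w_B,b_B)\in\Lambda=\mathbb{R}^{KL+3L+2}$. The guiding function is $\alpha(\theta;\lambda)=W(A)e^{iB}F(\theta)$ with a non-negative function $W$ and a prior guiding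 function $F$. Variational state: for $\lambda$ with $C(\lambda)=\int|\alpha(\theta;\lambda)|d\theta$ finite and positive, $|\psi(\lambda)\rangle=C(\lambda)^{-1}\int\alpha(\theta;\lambda)|\phi(\theta)\rangle\,d\theta$, $\langle \mathbb{1}\rangle(\lambda)=\langle\psi(\lambda)|\psi(\lambda)\rangle$, and $|\widetilde\psi(\lambda)\rangle=|\psi(\lambda)\rangle/\sqrt{\langle \mathbb{1}\rangle(\lambda)}$. For a real $x$, $\mathcal{V}_x=\{|\widetilde\psi(\lambda)\rangle:\lambda\in\Lambda,\ \langle \mathbb{1}\rangle(\lambda)\ge x\}$. *)

theory Defs
  imports "HOL-Analysis.Analysis"
begin

text \<open>Hilbert space of n qubits: complex vectors indexed by bit strings
  'n \<Rightarrow> bool, where n = CARD('n). The computational basis state |0...0> is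
  the basis vector at the all-False bit string.\<close>

definition ket0 :: "complex ^ ('n::finite \<Rightarrow> bool)" where
  "ket0 = axis (\<lambda>_. False) 1"

definition cadj :: "complex ^ 'a ^ 'b \<Rightarrow> complex ^ 'b ^ 'a" where
  "cadj M = (\<chi> i j. cnj (M $ j $ i))"

definition unitary_mat :: "complex ^ 'a ^ 'a \<Rightarrow> bool" where
  "unitary_mat M \<longleftrightarrow> M ** cadj M = mat 1 \<and> cadj M ** M = mat 1"

type_synonym ('k, 'l) netparam =
  "(real ^ 'k ^ 'l) \<times> (real ^ 'l) \<times> (real ^ 'l) \<times> real \<times> (real ^ 'l) \<times> real"

definition relu_hidden :: "real ^ 'k ^ 'l \<Rightarrow> real ^ 'l \<Rightarrow> real ^ 'k \<Rightarrow> real ^ 'l" where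
  "relu_hidden w b \<theta> = (\<chi> j. max 0 ((w *v \<theta> + b) $ j))"

definition netA :: "('k::finite, 'l::finite) netparam \<Rightarrow> real ^ 'k \<Rightarrow> real" where
  "netA = (\<lambda>(w, b, wA, bA, wB, bB) \<theta>. wA \<bullet> relu_hidden w b \<theta> + bA)"

definition netB :: "('k::finite, 'l::finite) netparam \<Rightarrow> real ^ 'k \<Rightarrow> real" where
  "netB = (\<lambda>(w, b, wA, bA, wB, bB) \<theta>. wB \<bullet> relu_hidden w b \<theta> + bB)"

definition guiding :: "(real \<Rightarrow> real) \<Rightarrow> (real ^ 'k \<Rightarrow> complex) \<Rightarrow>
    ('k::finite, 'l::finite) netparam \<Rightarrow> real ^ 'k \<Rightarrow> complex" where
  "guiding W F lam \<theta> = complex_of_real (W (netA lam \<theta>)) * cis (netB lam \<theta>) * F \<theta>"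

definition normC :: "(real \<Rightarrow> real) \<Rightarrow> (real ^ 'k \<Rightarrow> complex) \<Rightarrow>
    ('k::finite, 'l::finite) netparam \<Rightarrow> ennreal" where
  "normC W F lam = (\<integral>\<^sup>+ \<theta>. ennreal (cmod (guiding W F lam \<theta>)) \<partial>lborel)"

definition psi :: "(real \<Rightarrow> real) \<Rightarrow> (real ^ 'k \<Rightarrow> complex) \<Rightarrow>
    (real ^ 'k \<Rightarrow> complex ^ 'd) \<Rightarrow> ('k::finite, 'l::finite) netparam \<Rightarrow> complex ^ 'd::finite" where
  "psi W F \<phi> lam = (1 / complex_of_real (enn2real (normC W F lam))) *s
      (\<integral> \<theta>. guiding W F lam \<theta> *s \<phi> \<theta> \<partial>lborel)"

definition exp_one :: "(real \<Rightarrow> real) \<Rightarrow> (real ^ 'k \<Rightarrow> complex) \<Rightarrow>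
    (real ^ 'k \<Rightarrow> complex ^ 'd) \<Rightarrow> ('k::finite, 'l::finite) netparam \<Rightarrow> real" where
  "exp_one W F \<phi> lam = (norm (psi W F \<phi> lam :: complex ^ 'd::finite))\<^sup>2"

definition psi_tilde :: "(real \<Rightarrow> real) \<Rightarrow> (real ^ 'k \<Rightarrow> complex) \<Rightarrow>
    (real ^ 'k \<Rightarrow> complex ^ 'd) \<Rightarrow> ('k::finite, 'l::finite) netparam \<Rightarrow> complex ^ 'd::finite" where
  "psi_tilde W F \<phi> lam = (1 / sqrt (exp_one W F \<phi> lam)) *\<^sub>R psi W F \<phi> lam"

text \<open>V_x: normalised variational states over all admissible lambda
  (C finite and positive, <1> > 0 so that the normalisation is defined) with <1> \<ge> x.\<close>
definition Vset :: "(real \<Rightarrow> real) \<Rightarrow> (real ^ 'k \<Rightarrow> complex) \<Rightarrow>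
    (real ^ 'k \<Rightarrow> complex ^ 'd) \<Rightarrow> ('l::finite) itself \<Rightarrow> real \<Rightarrow> (complex ^ 'd::finite) set" where
  "Vset W F \<phi> (_ :: 'l itself) x =
     {psi_tilde W F \<phi> lam | lam :: ('k::finite, 'l) netparam.
        normC W F lam < \<infinity> \<and> 0 < normC W F lam \<and>
        0 < exp_one W F \<phi> lam \<and> x \<le> exp_one W F \<phi> lam}"

end

theory Submission
  imports Defs "HOL-Probability.Distributions"
begin

definition l1 :: "real^'k::finite \<Rightarrow> real" where "l1 u = (\<Sum>i\<in>UNIV. \<bar>u$i\<bar>)"

lemma l1_cont: "continuous_on UNIV (l1 :: real^'k::finite \<Rightarrow> real)"
  unfolding l1_def[abs_def] by (intro continuous_intros continuous_on_component continuous_on_id)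

lemma half_line_exp: "(\<integral>\<^sup>+x. ennreal (exp (-x)) * indicator {0..} x \<partial>lborel) = 1"
  using nn_intergal_power_times_exp_Ici[of 0] by simp

lemma half_line_exp_neg: "(\<integral>\<^sup>+x. ennreal (exp x) * indicator {0..} (-x) \<partial>lborel) = 1"
proof -
  have "(\<integral>\<^sup>+x. ennreal (exp (-x)) * indicator {0..} x \<partial>lborel)
     = ennreal \<bar>-1\<bar> * (\<integral>\<^sup>+x. ennreal (exp (-(0 + -1 * x))) * indicator {0..} (0 + -1 * x) \<partial>lborel)"
    by (rule nn_integral_real_affine) auto
  then show ?thesis using half_line_exp by simp
qed

lemma exp_abs_nn: "(\<integral>\<^sup>+x. ennreal (exp (-\<bar>x\<bar>)) \<partial>lborel) = 2"
proof -
  have "(\<integral>\<^sup>+x. ennreal (exp (-\<bar>x\<bar>)) \<partial>lborel) =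
        (\<integral>\<^sup>+x. ennreal (exp (-x)) * indicator {0..} x + ennreal (exp (-(-x))) * indicator {0..} (-x) \<partial>lborel)"
  proof (rule nn_integral_cong_AE)
    show "AE x in lborel. ennreal (exp (-\<bar>x\<bar>)) = ennreal (exp (-x)) * indicator {0..} x + ennreal (exp (-(-x))) * indicator {0..} (-x)"
      using AE_lborel_singleton[of "0::real"]
      by eventually_elim (auto split: split_indicator)
  qed
  also have "\<dots> = 2"
    by (subst nn_integral_add) (auto simp: half_line_exp half_line_exp_neg one_add_one)
  finally show ?thesis .
qed

lemma Basis_real_vec: "(Basis :: (real^'k::finite) set) = range (\<lambda>i. axis i 1)"
  by (auto simp: Basis_vec_def)

lemma Z_eq: "(\<integral>\<^sup>+u. ennreal (exp (- l1 (u::real^'k::finite))) \<partial>lborel) = 2 ^ CARD('k)"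
proof -
  have inj: "inj (\<lambda>i::'k. axis i (1::real))" by (auto simp: inj_def axis_eq_axis)
  have "\<And>u::real^'k. ennreal (exp (- l1 u)) = (\<Prod>b\<in>Basis. ennreal (exp (-\<bar>u \<bullet> b\<bar>)))"
  proof -
    fix u :: "real^'k"
    have "ennreal (exp (- l1 u)) = ennreal (\<Prod>i\<in>UNIV. exp (-\<bar>u$i\<bar>))"
      by (simp add: l1_def exp_sum[symmetric] sum_negf)
    also have "\<dots> = (\<Prod>i\<in>UNIV. ennreal (exp (-\<bar>u$i\<bar>)))"
      by (simp add: prod_ennreal)
    also have "\<dots> = (\<Prod>b\<in>Basis. ennreal (exp (-\<bar>u \<bullet> b\<bar>)))"
      unfolding Basis_real_vec by (subst prod.reindex[OF inj]) (simp add: inner_axis)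
    finally show "ennreal (exp (- l1 u)) = (\<Prod>b\<in>Basis. ennreal (exp (-\<bar>u \<bullet> b\<bar>)))" .
  qed
  then have "(\<integral>\<^sup>+u. ennreal (exp (- l1 (u::real^'k))) \<partial>lborel) =
      (\<integral>\<^sup>+u. (\<Prod>b\<in>(Basis::(real^'k) set). (\<lambda>b x. ennreal (exp (-\<bar>x\<bar>))) b (u \<bullet> b)) \<partial>lborel)"
    by simp
  also have "\<dots> = (\<Prod>b\<in>(Basis::(real^'k) set). (\<integral>\<^sup>+x. ennreal (exp (-\<bar>x\<bar>)) \<partial>lborel))"
    by (rule nn_integral_lborel_prod) auto
  also have "\<dots> = 2 ^ CARD('k)"
    by (simp add: exp_abs_nn)
  finally show ?thesis .
qed


lemma l1_scale: "r \<ge> 0 \<Longrightarrow> l1 (r *\<^sub>R x) = r * l1 x"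
  by (simp add: l1_def abs_mult sum_distrib_left)

lemma nn_integral_affine_euclid:
  fixes t :: "'a::euclidean_space" and f :: "'a \<Rightarrow> ennreal"
  assumes [measurable]: "f \<in> borel_measurable borel" and c: "c \<noteq> 0"
  shows "(\<integral>\<^sup>+x. f x \<partial>lborel) = ennreal (\<bar>c\<bar>^DIM('a)) * (\<integral>\<^sup>+x. f (t + c *\<^sub>R x) \<partial>lborel)"
  by (subst lborel_affine[OF c, of t]) (simp add: nn_integral_density nn_integral_distr nn_integral_cmult)

lemma integral_affine_euclid:
  fixes t :: "'a::euclidean_space" and f :: "'a \<Rightarrow> 'b::{banach, second_countable_topology}"
  assumes [measurable]: "f \<in> borel_measurable borel" and c: "c \<noteq> 0"
  shows "(\<integral>x. f x \<partial>lborel) = (\<bar>c\<bar>^DIM('a)) *\<^sub>R (\<integral>x. f (t + c *\<^sub>R x) \<partial>lborel)"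
  by (subst lborel_affine[OF c, of t]) (simp add: integral_density integral_distr)

lemma net_exists:
  fixes c :: real and \<theta>0 :: "real^'k::finite"
  assumes L: "CARD('l::finite) \<ge> 2 * CARD('k)"
  shows "\<exists>lam::('k,'l) netparam. (\<forall>\<theta>. netA lam \<theta> = c * l1 (\<theta> - \<theta>0)) \<and> (\<forall>\<theta>. netB lam \<theta> = 0)"
proof -
  have "card (UNIV :: ('k \<times> bool) set) \<le> card (UNIV :: 'l set)"
    using L by (simp add: card_cartesian_product[symmetric] UNIV_Times_UNIV[symmetric] del: UNIV_Times_UNIV)
  then obtain g :: "'k \<times> bool \<Rightarrow> 'l" where g: "inj g"
    using card_le_inj[of "UNIV :: ('k \<times> bool) set" "UNIV :: 'l set"] by auto
  define h where "h = inv g"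
  have hg: "h (g p) = p" for p unfolding h_def using g by simp
  define sg :: "'k \<times> bool \<Rightarrow> real" where "sg p = (if snd p then 1 else -1)" for p
  define w :: "real^'k^'l" where "w = (\<chi> j. if j \<in> range g then sg (h j) *\<^sub>R axis (fst (h j)) 1 else 0)"
  define b :: "real^'l" where "b = (\<chi> j. if j \<in> range g then - (sg (h j) * \<theta>0 $ fst (h j)) else 0)"
  define wA :: "real^'l" where "wA = (\<chi> j. if j \<in> range g then c else 0)"
  define lam :: "('k,'l) netparam" where "lam = (w, b, wA, 0, 0, 0)"
  have A: "netA lam \<theta> = c * l1 (\<theta> - \<theta>0)" for \<theta>
  proof -
    let ?X = "\<lambda>j. wA $ j * relu_hidden w b \<theta> $ j"
    have "netA lam \<theta> = (\<Sum>j\<in>UNIV. ?X j)"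
      by (simp add: lam_def netA_def inner_vec_def)
    also have "\<dots> = (\<Sum>j\<in>range g. ?X j)"
      by (rule sum.mono_neutral_right) (auto simp: wA_def)
    also have "\<dots> = (\<Sum>p\<in>UNIV. ?X (g p))"
      by (rule sum.reindex[OF g, unfolded comp_def])
    also have "\<dots> = (\<Sum>p\<in>UNIV. c * max 0 (sg p * (\<theta> $ fst p - \<theta>0 $ fst p)))"
      by (intro sum.cong refl) (simp add: wA_def relu_hidden_def w_def b_def hg
            matrix_vector_mul_component inner_axis' algebra_simps)
    also have "\<dots> = (\<Sum>i\<in>UNIV. \<Sum>s\<in>UNIV. c * max 0 (sg (i,s) * (\<theta> $ i - \<theta>0 $ i)))"
      by (simp add: UNIV_Times_UNIV[symmetric] sum.cartesian_product split_beta del: UNIV_Times_UNIV)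
    also have "\<dots> = (\<Sum>i\<in>UNIV. c * \<bar>\<theta> $ i - \<theta>0 $ i\<bar>)"
      by (intro sum.cong refl) (auto simp: UNIV_bool sg_def abs_if max_def distrib_left[symmetric])
    also have "\<dots> = c * l1 (\<theta> - \<theta>0)"
      by (simp add: l1_def sum_distrib_left)
    finally show ?thesis .
  qed
  have B: "netB lam \<theta> = 0" for \<theta>
    by (simp add: lam_def netB_def)
  show ?thesis using A B by blast
qed


lemma ket0_col: "M *v (ket0 :: complex^('n::finite \<Rightarrow> bool)) = (\<chi> i. M $ i $ (\<lambda>_. False))"
  by (simp add: ket0_def vec_eq_iff matrix_vector_mult_def axis_def if_distrib[where f="\<lambda>x. a * x" for a] sum.delta' cong: if_cong)

lemma unitary_norm:
  fixes M :: "complex^('n::finite \<Rightarrow> bool)^('n \<Rightarrow> bool)"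
  assumes "unitary_mat M"
  shows "norm (M *v ket0) = 1"
proof -
  let ?e = "(\<lambda>_. False) :: 'n \<Rightarrow> bool"
  have "(cadj M ** M) $ ?e $ ?e = 1" using assms by (simp add: unitary_mat_def mat_def)
  then have "(\<Sum>k\<in>UNIV. cnj (M $ k $ ?e) * M $ k $ ?e) = 1"
    by (simp add: matrix_matrix_mult_def cadj_def)
  then have "(\<Sum>k\<in>UNIV. complex_of_real ((cmod (M $ k $ ?e))\<^sup>2)) = 1"
    unfolding complex_norm_square by (simp add: mult.commute)
  then have "complex_of_real (\<Sum>k\<in>UNIV. (cmod (M $ k $ ?e))\<^sup>2) = 1"
    by simp
  then have s: "(\<Sum>k\<in>UNIV. (cmod (M $ k $ ?e))\<^sup>2) = 1"
    using of_real_eq_1_iff by blast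
  show ?thesis
    by (simp add: ket0_col norm_vec_def L2_set_def s)
qed

lemma phi_cont:
  fixes U :: "real ^ 'k::finite \<Rightarrow> complex ^ ('n::finite\<Rightarrow>bool) ^ ('n \<Rightarrow> bool)"
  assumes diff: "\<And>\<theta>. U differentiable (at \<theta>)"
  shows "continuous_on UNIV (\<lambda>t. U t *v ket0)"
proof -
  have "continuous_on UNIV U"
    by (intro continuous_at_imp_continuous_on ballI differentiable_imp_continuous_within diff)
  then show ?thesis
    unfolding ket0_col
    by (intro continuous_on_vec_lambda continuous_on_component)
qed


lemma l1_meas[measurable]: "l1 \<in> borel_measurable borel"
  by (rule borel_measurable_continuous_onI[OF l1_cont])

lemma ofreal_smult: "(complex_of_real r) *s (v :: complex^'d) = r *\<^sub>R v"
  by (simp add: vec_eq_iff of_real_def)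

lemma normC_eq:
  fixes lam :: "('k::finite,'l::finite) netparam" and c :: real
  assumes A: "\<And>\<theta>. netA lam \<theta> = c * l1 (\<theta> - \<theta>0)" and c: "c > 0"
  shows "normC (\<lambda>a. exp (- a)) (\<lambda>_. 1) lam = ennreal ((1/c)^CARD('k) * 2^CARD('k))"
proof -
  have "normC (\<lambda>a. exp (- a)) (\<lambda>_. 1) lam = (\<integral>\<^sup>+\<theta>. ennreal (exp (- (c * l1 (\<theta> - \<theta>0)))) \<partial>lborel)"
    by (simp add: normC_def guiding_def A norm_mult)
  also have "\<dots> = ennreal (\<bar>1/c\<bar>^DIM(real^'k)) * (\<integral>\<^sup>+x. ennreal (exp (- (c * l1 ((\<theta>0 + (1/c) *\<^sub>R x) - \<theta>0)))) \<partial>lborel)"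
    by (rule nn_integral_affine_euclid) (use c in auto)
  also have "\<dots> = ennreal ((1/c)^CARD('k)) * (\<integral>\<^sup>+x. ennreal (exp (- l1 (x::real^'k))) \<partial>lborel)"
  proof -
    have "\<And>x. c * l1 ((\<theta>0 + (1/c) *\<^sub>R x) - \<theta>0) = l1 x" using c by (simp add: l1_scale)
    moreover have "\<bar>1/c\<bar>^DIM(real^'k) = (1/c)^CARD('k)" using c by simp
    ultimately show ?thesis by simp
  qed
  also have "\<dots> = ennreal ((1/c)^CARD('k) * 2^CARD('k))"
    using c by (simp add: Z_eq ennreal_mult ennreal_power[symmetric])
  finally show ?thesis .
qed


lemma psi_eq:
  fixes lam :: "('k::finite,'l::finite) netparam" and c :: real and \<phi> :: "real^'k \<Rightarrow> complex^'d::finite"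
  assumes A: "\<And>\<theta>. netA lam \<theta> = c * l1 (\<theta> - \<theta>0)" and B: "\<And>\<theta>. netB lam \<theta> = 0" and c: "c > 0"
    and phim[measurable]: "\<phi> \<in> borel_measurable borel"
  shows "psi (\<lambda>a. exp (- a)) (\<lambda>_. 1) \<phi> lam =
     (1 / 2^CARD('k)) *\<^sub>R (\<integral>u. exp (- l1 u) *\<^sub>R \<phi> (\<theta>0 + (1/c) *\<^sub>R u) \<partial>lborel)"
proof -
  let ?J = "\<integral>u. exp (- l1 u) *\<^sub>R \<phi> (\<theta>0 + (1/c) *\<^sub>R u) \<partial>lborel"
  have N: "enn2real (normC (\<lambda>a. exp (- a)) (\<lambda>_. 1) lam) = (1/c)^CARD('k) * 2^CARD('k)"
    using normC_eq[OF A c] c by simp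
  have "(\<integral>\<theta>. guiding (\<lambda>a. exp (- a)) (\<lambda>_. 1) lam \<theta> *s \<phi> \<theta> \<partial>lborel)
      = (\<integral>\<theta>. exp (- (c * l1 (\<theta> - \<theta>0))) *\<^sub>R \<phi> \<theta> \<partial>lborel)"
    by (simp add: guiding_def A B ofreal_smult)
  also have "\<dots> = (\<bar>1/c\<bar>^DIM(real^'k)) *\<^sub>R
      (\<integral>x. exp (- (c * l1 ((\<theta>0 + (1/c) *\<^sub>R x) - \<theta>0))) *\<^sub>R \<phi> (\<theta>0 + (1/c) *\<^sub>R x) \<partial>lborel)"
    by (rule integral_affine_euclid) (use c in auto)
  also have "\<dots> = (1/c)^CARD('k) *\<^sub>R ?J"
  proof -
    have "\<And>x. c * l1 ((\<theta>0 + (1/c) *\<^sub>R x) - \<theta>0) = l1 x" using c by (simp add: l1_scale)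
    moreover have "\<bar>1/c\<bar>^DIM(real^'k) = (1/c)^CARD('k)" using c by simp
    ultimately show ?thesis by simp
  qed
  finally have I: "(\<integral>\<theta>. guiding (\<lambda>a. exp (- a)) (\<lambda>_. 1) lam \<theta> *s \<phi> \<theta> \<partial>lborel) = (1/c)^CARD('k) *\<^sub>R ?J" .
  have "psi (\<lambda>a. exp (- a)) (\<lambda>_. 1) \<phi> lam = (1 / ((1/c)^CARD('k) * 2^CARD('k))) *\<^sub>R ((1/c)^CARD('k) *\<^sub>R ?J)"
  proof -
    have e: "1 / complex_of_real ((1/c)^CARD('k) * 2^CARD('k)) = complex_of_real (1 / ((1/c)^CARD('k) * 2^CARD('k)))"
      by (simp only: of_real_divide of_real_1)
    show ?thesis unfolding psi_def I N e ofreal_smult ..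
  qed
  also have "\<dots> = (1 / 2^CARD('k)) *\<^sub>R ?J"
    using c by simp
  finally show ?thesis .
qed


lemma two_pow_ennreal: "(2::ennreal)^n = ennreal (2^n)"
  by (metis ennreal_numeral ennreal_power zero_le_numeral)

lemma Z_int: "integrable lborel (\<lambda>u::real^'k::finite. exp (- l1 u))"
  by (rule integrableI_nonneg) (auto simp: Z_eq two_pow_ennreal)

lemma Z_integral: "(\<integral>u. exp (- l1 (u::real^'k::finite)) \<partial>lborel) = 2^CARD('k)"
  by (subst integral_eq_nn_integral) (auto simp: Z_eq two_pow_ennreal)

lemma J_lim:
  fixes \<phi> :: "real^'k::finite \<Rightarrow> complex^'d::finite"
  assumes cont: "continuous_on UNIV \<phi>" and bnd: "\<And>t. norm (\<phi> t) \<le> 1"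
  shows "(\<lambda>n. \<integral>u. exp (- l1 u) *\<^sub>R \<phi> (\<theta>0 + (1 / real (Suc n)) *\<^sub>R u) \<partial>lborel)
           \<longlonglongrightarrow> (2^CARD('k)) *\<^sub>R \<phi> \<theta>0"
proof -
  have phim[measurable]: "\<phi> \<in> borel_measurable borel"
    by (rule borel_measurable_continuous_onI[OF cont])
  have lim: "(\<lambda>n. \<integral>u. exp (- l1 u) *\<^sub>R \<phi> (\<theta>0 + (1 / real (Suc n)) *\<^sub>R u) \<partial>lborel)
           \<longlonglongrightarrow> integral\<^sup>L lborel (\<lambda>u::real^'k. exp (- l1 u) *\<^sub>R \<phi> \<theta>0)"
  proof (rule integral_dominated_convergence[where w="\<lambda>u::real^'k. exp (- l1 u)" and M=lborel
      and s="\<lambda>n u. exp (- l1 u) *\<^sub>R \<phi> (\<theta>0 + (1 / real (Suc n)) *\<^sub>R u)"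
      and f="\<lambda>u::real^'k. exp (- l1 u) *\<^sub>R \<phi> \<theta>0"])
    show "integrable lborel (\<lambda>u. exp (- l1 u))" by (rule Z_int)
    show "(\<lambda>u. exp (- l1 u) *\<^sub>R \<phi> \<theta>0) \<in> borel_measurable lborel" by measurable
    show "(\<lambda>u. exp (- l1 u) *\<^sub>R \<phi> (\<theta>0 + (1 / real (Suc n)) *\<^sub>R u)) \<in> borel_measurable lborel" for n
      by measurable
    show "AE u in lborel. norm (exp (- l1 u) *\<^sub>R \<phi> (\<theta>0 + (1 / real (Suc n)) *\<^sub>R u)) \<le> exp (- l1 u)" for n
      using bnd by (auto simp: mult_left_le)
    show "AE u in lborel. (\<lambda>n. exp (- l1 u) *\<^sub>R \<phi> (\<theta>0 + (1 / real (Suc n)) *\<^sub>R u)) \<longlonglongrightarrow> exp (- l1 u) *\<^sub>R \<phi> \<theta>0"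
    proof (rule AE_I2)
      fix u :: "real^'k"
      have "(\<lambda>n. 1 / real (Suc n)) \<longlonglongrightarrow> 0"
        using LIMSEQ_inverse_real_of_nat by (simp add: inverse_eq_divide)
      then have "(\<lambda>n. \<theta>0 + (1 / real (Suc n)) *\<^sub>R u) \<longlonglongrightarrow> \<theta>0 + 0 *\<^sub>R u"
        by (intro tendsto_intros)
      then have t: "(\<lambda>n. \<theta>0 + (1 / real (Suc n)) *\<^sub>R u) \<longlonglongrightarrow> \<theta>0" by simp
      have "isCont \<phi> \<theta>0" using cont by (simp add: continuous_on_eq_continuous_at)
      then have "(\<lambda>n. \<phi> (\<theta>0 + (1 / real (Suc n)) *\<^sub>R u)) \<longlonglongrightarrow> \<phi> \<theta>0"
        using t by (rule isCont_tendsto_compose)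
      then show "(\<lambda>n. exp (- l1 u) *\<^sub>R \<phi> (\<theta>0 + (1 / real (Suc n)) *\<^sub>R u)) \<longlonglongrightarrow> exp (- l1 u) *\<^sub>R \<phi> \<theta>0"
        by (intro tendsto_intros)
    qed
  qed
  also have "integral\<^sup>L lborel (\<lambda>u::real^'k. exp (- l1 u) *\<^sub>R \<phi> \<theta>0) = (2^CARD('k)) *\<^sub>R \<phi> \<theta>0"
    by (subst integral_scaleR_left) (use Z_int in \<open>auto simp: Z_integral\<close>)
  finally show ?thesis .
qed


theorem theorem3:
  fixes U :: "real ^ 'k \<Rightarrow> complex ^ ('n::finite \<Rightarrow> bool) ^ ('n \<Rightarrow> bool)"
    and \<xi> :: real
  assumes unitary: "\<And>\<theta>. unitary_mat (U \<theta>)"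
    and diff: "\<And>\<theta>. U differentiable (at \<theta>)"
    and xi_pos: "\<xi> > 0"
    and grad_bound: "\<And>\<theta> v. norm v = 1 \<Longrightarrow>
           norm (frechet_derivative (\<lambda>t. U t *v ket0) (at \<theta>) v) \<le> \<xi>"
    and L_ge: "CARD('l::finite) \<ge> 2 * CARD('k::finite)"
  shows "\<forall>\<theta> :: real ^ 'k. \<forall>x :: real. x < 1 \<longrightarrow>
           (INF v \<in> Vset (\<lambda>a. exp (- a)) (\<lambda>_. 1) (\<lambda>t. U t *v ket0) TYPE('l) x.
              norm (v - U \<theta> *v ket0)) = 0"
proof (intro allI impI)
  fix \<theta>0 :: "real^'k" and x :: real
  assume x: "x < 1"
  define \<phi> where "\<phi> = (\<lambda>t. U t *v ket0)"
  let ?W = "\<lambda>a::real. exp (- a)" and ?F = "\<lambda>_::real^'k. 1::complex"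
  have cont: "continuous_on UNIV \<phi>" unfolding \<phi>_def by (rule phi_cont[OF diff])
  have bnd: "norm (\<phi> t) \<le> 1" for t unfolding \<phi>_def using unitary_norm[OF unitary] by simp
  have n0: "norm (\<phi> \<theta>0) = 1" unfolding \<phi>_def using unitary_norm[OF unitary] by simp
  have phim: "\<phi> \<in> borel_measurable borel" by (rule borel_measurable_continuous_onI[OF cont])
  have "\<forall>n. \<exists>lam::('k,'l) netparam. (\<forall>\<theta>. netA lam \<theta> = real (Suc n) * l1 (\<theta> - \<theta>0)) \<and> (\<forall>\<theta>. netB lam \<theta> = 0)"
    using net_exists[OF L_ge] by blast
  then obtain lam :: "nat \<Rightarrow> ('k,'l) netparam" where
    lamA: "\<And>n \<theta>. netA (lam n) \<theta> = real (Suc n) * l1 (\<theta> - \<theta>0)" and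
    lamB: "\<And>n \<theta>. netB (lam n) \<theta> = 0"
    by metis
  have psi_n: "psi ?W ?F \<phi> (lam n) = (1 / 2^CARD('k)) *\<^sub>R
      (\<integral>u. exp (- l1 u) *\<^sub>R \<phi> (\<theta>0 + (1 / real (Suc n)) *\<^sub>R u) \<partial>lborel)" for n
    by (rule psi_eq[OF lamA lamB _ phim]) simp
  have "(\<lambda>n. (1 / 2^CARD('k)) *\<^sub>R
      (\<integral>u. exp (- l1 u) *\<^sub>R \<phi> (\<theta>0 + (1 / real (Suc n)) *\<^sub>R u) \<partial>lborel))
      \<longlonglongrightarrow> (1 / 2^CARD('k)) *\<^sub>R ((2^CARD('k)) *\<^sub>R \<phi> \<theta>0)"
    by (intro tendsto_intros J_lim[OF cont bnd])
  then have psi_lim: "(\<lambda>n. psi ?W ?F \<phi> (lam n)) \<longlonglongrightarrow> \<phi> \<theta>0"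
    by (simp add: psi_n)
  have e_lim: "(\<lambda>n. exp_one ?W ?F \<phi> (lam n)) \<longlonglongrightarrow> 1"
    unfolding exp_one_def using tendsto_power[OF tendsto_norm[OF psi_lim], of 2] n0 by simp
  have "(\<lambda>n. (1 / sqrt (exp_one ?W ?F \<phi> (lam n))) *\<^sub>R psi ?W ?F \<phi> (lam n))
        \<longlonglongrightarrow> (1 / sqrt 1) *\<^sub>R \<phi> \<theta>0"
    by (intro tendsto_intros e_lim psi_lim) simp
  then have pt_lim: "(\<lambda>n. psi_tilde ?W ?F \<phi> (lam n)) \<longlonglongrightarrow> \<phi> \<theta>0"
    by (simp add: psi_tilde_def)
  have "(\<lambda>n. norm (psi_tilde ?W ?F \<phi> (lam n) - \<phi> \<theta>0)) \<longlonglongrightarrow> norm (\<phi> \<theta>0 - \<phi> \<theta>0)"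
    by (intro tendsto_intros pt_lim)
  then have d_lim: "(\<lambda>n. norm (psi_tilde ?W ?F \<phi> (lam n) - \<phi> \<theta>0)) \<longlonglongrightarrow> 0" by simp
  have C: "normC ?W ?F (lam n) < \<infinity> \<and> 0 < normC ?W ?F (lam n)" for n
  proof -
    have "normC ?W ?F (lam n) = ennreal ((1/real (Suc n))^CARD('k) * 2^CARD('k))"
      by (rule normC_eq[OF lamA]) simp
    then show ?thesis by simp
  qed
  have "max x 0 < 1" using x by simp
  from order_tendstoD(1)[OF e_lim this]
  have ev: "eventually (\<lambda>n. psi_tilde ?W ?F \<phi> (lam n) \<in> Vset ?W ?F \<phi> TYPE('l) x) sequentially"
  proof eventually_elim
    case (elim n)
    then show ?case unfolding Vset_def using C[of n]
      by (intro CollectI exI[of _ "lam n"]) (auto simp del: split_paired_Ex)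
  qed
  let ?S = "Vset ?W ?F \<phi> TYPE('l) x"
  let ?g = "\<lambda>v. norm (v - \<phi> \<theta>0)"
  have ne: "?S \<noteq> {}" using eventually_happens'[OF _ ev] by auto
  have bdd: "bdd_below (?g ` ?S)" by (rule bdd_belowI[where m=0]) auto
  have lb: "0 \<le> (INF v\<in>?S. ?g v)" by (rule cINF_greatest[OF ne]) simp
  have "eventually (\<lambda>n. (INF v\<in>?S. ?g v) \<le> norm (psi_tilde ?W ?F \<phi> (lam n) - \<phi> \<theta>0)) sequentially"
    using ev by eventually_elim (rule cINF_lower[OF bdd])
  then have ub: "(INF v\<in>?S. ?g v) \<le> 0"
    by (intro tendsto_le[OF trivial_limit_sequentially d_lim tendsto_const])
  have "(INF v\<in>?S. ?g v) = 0" using lb ub by simp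
  then show "(INF v \<in> Vset (\<lambda>a. exp (- a)) (\<lambda>_. 1) (\<lambda>t. U t *v ket0) TYPE('l) x.
              norm (v - U \<theta>0 *v ket0)) = 0"
    unfolding \<phi>_def .
qed

end
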